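(* For all non-negative integers $s,k$ with $k\le s$, $$s(s-1)\cdots(s-k+1)\ \ge\ \Big(s-\frac{e-1}{e}\,k\Big)^k.$$ *)

theory Defs
  imports Complex_Main
begin

end

theory Submission
  imports Defs "HOL-Analysis.Analysis"
begin

lemma exp_le_chord: assumes "0 \<le> y" "y \<le> (1::real)" shows "exp y \<le> 1 + (exp 1 - 1) * y"
proof -
  have "exp ((1 - y) *\<^sub>R 0 + y *\<^sub>R 1) \<le> (1 - y) * exp 0 + y * exp 1"
    using convex_onD[OF exp_convex, of y 0 1] assms by simp
  thus ?thesis by (simp add: algebra_simps)
qed

lemma step:
  fixes m k :: nat
  defines "A \<equiv> real m + real k / exp 1"
  assumes "A > 0"
  shows "(A + 1 / exp 1) ^ Suc k \<le> (real m + real k + 1) * A ^ k"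
proof -
  define y where "y = real k / (exp 1 * A)"
  have e: "exp 1 > (1::real)" by simp
  have y0: "y \<ge> 0" using assms by (simp add: y_def)
  have "real k \<le> exp 1 * A" unfolding A_def using e by (simp add: algebra_simps)
  hence y1: "y \<le> 1" using assms by (simp add: y_def divide_le_eq)
  have "A + 1/exp 1 = A * (1 + 1/(exp 1 * A))"
    using \<open>A > 0\<close> by (simp add: field_simps)
  hence "(A + 1/exp 1) ^ k = A ^ k * (1 + 1/(exp 1 * A)) ^ k"
    by (simp add: power_mult_distrib)
  also have "(1 + 1/(exp 1 * A)) ^ k \<le> exp (1/(exp 1 * A)) ^ k"
    apply (rule power_mono) using assms by (auto intro: exp_ge_add_one_self add_nonneg_nonneg)
  also have "exp (1/(exp 1 * A)) ^ k = exp y"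
    by (simp add: y_def exp_of_nat_mult[symmetric])
  finally have p: "(A + 1/exp 1) ^ k \<le> A ^ k * exp y"
    using assms by (simp add: mult_left_mono)
  have ey: "exp y \<le> 1 + (exp 1 - 1) * y" using exp_le_chord y0 y1 by blast
  have "exp 1 * A * y = real k" using assms by (simp add: y_def)
  hence keq: "A * ((exp 1 - 1) * y) = real k * (1 - 1/exp 1)"
    by (simp add: field_simps)
  have "(A + 1/exp 1) * exp y \<le> A * (1 + (exp 1 - 1) * y) + 1/exp 1 * exp y"
  proof -
    have "A * exp y \<le> A * (1 + (exp 1 - 1) * y)" using ey \<open>A>0\<close> by (simp add: mult_left_mono)
    moreover have "(A + 1/exp 1) * exp y = A * exp y + 1/exp 1 * exp y" by (simp add: distrib_right)
    ultimately show ?thesis by linarith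
  qed
  also have "1/exp 1 * exp y \<le> 1"
  proof -
    have "exp y \<le> exp 1" using y1 by simp
    thus ?thesis by (simp add: field_simps)
  qed
  hence "A * (1 + (exp 1 - 1) * y) + 1/exp 1 * exp y \<le> A * (1 + (exp 1 - 1) * y) + 1" by simp
  also have "A * (1 + (exp 1 - 1) * y) + 1 = real m + real k + 1"
    using keq unfolding A_def by (simp add: algebra_simps)
  finally have q: "(A + 1/exp 1) * exp y \<le> real m + real k + 1" .
  have "(A + 1/exp 1) ^ Suc k = (A + 1/exp 1) * (A + 1/exp 1) ^ k" by simp
  also have "\<dots> \<le> (A + 1/exp 1) * (A ^ k * exp y)"
    apply (rule mult_left_mono[OF p]) using assms by (simp add: add_nonneg_nonneg)
  also have "\<dots> = ((A + 1/exp 1) * exp y) * A ^ k" by simp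
  also have "\<dots> \<le> (real m + real k + 1) * A ^ k"
    apply (rule mult_right_mono[OF q]) using assms by simp
  finally show ?thesis .
qed

lemma main: "(\<Prod>i<k. real (m + k - i)) \<ge> (real m + real k / exp 1) ^ k"
proof (induction k)
  case 0 then show ?case by simp
next
  case (Suc k)
  have pe: "(\<Prod>i<Suc k. real (m + Suc k - i)) = real (m + Suc k) * (\<Prod>i<k. real (m + k - i))"
  proof -
    have "(\<Prod>i<Suc k. real (m + Suc k - i)) = real (m + Suc k - 0) * (\<Prod>i<k. real (m + Suc k - Suc i))"
      by (rule prod.lessThan_Suc_shift)
    also have "(\<Prod>i<k. real (m + Suc k - Suc i)) = (\<Prod>i<k. real (m + k - i))" by simp
    finally show ?thesis by simp
  qed
  show ?case
  proof (cases "real m + real k / exp 1 > 0")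
    case True
    have "(real m + real (Suc k) / exp 1) ^ Suc k = (real m + real k / exp 1 + 1/exp 1) ^ Suc k"
      by (simp add: add_divide_distrib algebra_simps)
    also have "\<dots> \<le> (real m + real k + 1) * (real m + real k / exp 1) ^ k"
      using step[of m k] True by simp
    also have "\<dots> \<le> (real m + real k + 1) * (\<Prod>i<k. real (m + k - i))"
      by (rule mult_left_mono[OF Suc.IH]) simp
    finally have c: "(real m + real (Suc k) / exp 1) ^ Suc k \<le> (real m + real k + 1) * (\<Prod>i<k. real (m + k - i))" .
    have "real (m + Suc k) = real m + real k + 1" by simp
    then show ?thesis unfolding pe using c by metis
  next
    case False
    have k0: "real k / exp 1 \<ge> 0" by simp
    have "real m \<ge> 0" by simp
    hence "real m = 0" "real k / exp 1 = 0" using False k0 by linarith+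
    hence "m = 0" "k = 0" by simp_all
    then show ?thesis by (simp add: field_simps)
  qed
qed

theorem lemma3:
  fixes s k :: nat
  assumes "k \<le> s"
  shows "(\<Prod>i<k. real (s - i)) \<ge> (real s - (exp 1 - 1) / exp 1 * real k) ^ k"
proof -
  define m where "m = s - k"
  have s: "s = m + k" using assms by (simp add: m_def)
  have "real s - (exp 1 - 1) / exp 1 * real k = real m + real k / exp 1"
    by (simp add: s field_simps)
  moreover have "(\<Prod>i<k. real (s - i)) = (\<Prod>i<k. real (m + k - i))" by (simp only: s)
  ultimately show ?thesis using main[where m=m and k=k] by simp
qed

end
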